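(* Let $r\ge2$ and $\ell\ge r-1$. Then every semi-valid tuple of length $2\ell+1$ in $\Omega_n$ is $r$-valid.
   Context: $\Omega_n=\{v_0,\dots,v_{n-1}\}$ with cyclic order $v_0<\dots<v_{n-1}<v_0$. For distinct vertices $u,w$, $[u,w]$ is the set consisting of $u$, $w$ and all vertices met when moving clockwise from $u$ to $w$. A tuple $C=(w_1,\dots,w_{2\ell+1})$ of distinct vertices is semi-valid if $w_1<w_3<\dots<w_{2\ell+1}<w_2<w_4<\dots<w_{2\ell}<w_1$ in clockwise cyclic order, and $r$-valid if moreover $|[w_i,w_{i-1}]|\ge r$ for all $i$ (indices mod $2\ell+1$). *)

theory Defs
  imports Main
begin

text \<open>Vertices of \<Omega>_n are v_0,...,v_{n-1}, represented by the naturals 0,...,n-1;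
  clockwise successor of v_i is v_{(i+1) mod n}.\<close>

definition vertex :: "nat \<Rightarrow> nat \<Rightarrow> bool" where
  "vertex n v \<longleftrightarrow> v < n"

text \<open>A list of distinct vertices a_1,...,a_k is in clockwise cyclic order
  a_1 < a_2 < ... < a_k < a_1 iff some rotation of it is strictly increasing.\<close>
definition cyc_ordered :: "nat list \<Rightarrow> bool" where
  "cyc_ordered xs \<longleftrightarrow> (\<exists>k. sorted_wrt (<) (rotate k xs))"

text \<open>The clockwise arc [u,w]: u, w and every vertex met going clockwise from u to w.\<close>
definition arc :: "nat \<Rightarrow> nat \<Rightarrow> nat \<Rightarrow> nat set" where
  "arc n u w = {(u + j) mod n | j. j \<le> (w + n - u) mod n}"

text \<open>A tuple C = (w_1,...,w_{2l+1}) is encoded as a list ws with w_i = ws ! (i-1).\<close>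
definition semi_valid :: "nat \<Rightarrow> nat \<Rightarrow> nat list \<Rightarrow> bool" where
  "semi_valid n l ws \<longleftrightarrow>
     length ws = 2 * l + 1 \<and> distinct ws \<and> (\<forall>v \<in> set ws. vertex n v) \<and>
     cyc_ordered (map (\<lambda>j. ws ! (2 * j)) [0..<l + 1] @ map (\<lambda>j. ws ! (2 * j + 1)) [0..<l])"

definition r_valid :: "nat \<Rightarrow> nat \<Rightarrow> nat \<Rightarrow> nat list \<Rightarrow> bool" where
  "r_valid n r l ws \<longleftrightarrow> semi_valid n l ws \<and>
     (\<forall>i < length ws. card (arc n (ws ! i) (ws ! ((i + length ws - 1) mod length ws))) \<ge> r)"

end

theory Submission
  imports Defs
begin

lemma arc_mem:
  assumes "u < n" "x < n" "(x + n - u) mod n \<le> (w + n - u) mod n"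
  shows "x \<in> arc n u w"
proof -
  have "(u + (x + n - u) mod n) mod n = x"
    using assms by (simp add: mod_add_right_eq)
  then show ?thesis unfolding arc_def using assms(3) by (metis (mono_tags, lifting) mem_Collect_eq)
qed

lemma arc_finite: "finite (arc n u w)"
proof -
  have "arc n u w = (\<lambda>j. (u + j) mod n) ` {..(w + n - u) mod n}"
    unfolding arc_def by auto
  then show ?thesis by simp
qed

lemma mod_shift: "x < (n::nat) \<Longrightarrow> u \<le> x \<Longrightarrow> (x + n - u) mod n = x - u"
proof -
  assume "x < n" "u \<le> x"
  then have e: "x + n - u = (x - u) + n" by simp
  have "x - u < n" using \<open>x < n\<close> by simp
  then show ?thesis unfolding e by (simp only: mod_add_self2 mod_less)
qed

lemma sorted_le:
  fixes S :: "nat list"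
  assumes "sorted_wrt (<) S" "i \<le> j" "j < length S"
  shows "S ! i \<le> S ! j"
proof (cases "i = j")
  case False
  then show ?thesis using assms sorted_wrt_nth_less[OF assms(1), of i j] by simp
qed simp

lemma sorted_arc:
  fixes S :: "nat list"
  assumes srt: "sorted_wrt (<) S" and bd: "\<forall>x\<in>set S. x < n"
    and a: "a < length S" and b: "b < length S"
  shows "card (arc n (S!a) (S!b)) \<ge> nat ((int b - int a) mod int (length S)) + 1"
proof -
  define m where "m = length S"
  define d where "d = nat ((int b - int a) mod int m)"
  define f where "f t = S ! ((a + t) mod m)" for t
  have m0: "m > 0" unfolding m_def using a by linarith
  have dcase: "(a \<le> b \<and> d = b - a) \<or> (b < a \<and> d = b + m - a)"
  proof (cases "a \<le> b")
    case True
    then have "(int b - int a) mod int m = int b - int a"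
      using b m_def by (intro mod_pos_pos_trivial) auto
    then show ?thesis using True d_def by simp
  next
    case False
    have "(int b - int a) mod int m = (int b - int a + int m) mod int m"
      by simp
    also have "\<dots> = int b - int a + int m"
      using False a m_def by (intro mod_pos_pos_trivial) auto
    finally show ?thesis using False d_def a m_def by auto
  qed
  have dm: "d < m" using dcase a b m_def by auto
  have un: "S ! a < n" "S ! b < n" using a b bd by auto
  have sub: "f ` {..d} \<subseteq> arc n (S!a) (S!b)"
  proof
    fix y assume "y \<in> f ` {..d}"
    then obtain t where t: "t \<le> d" "y = f t" by auto
    have pos: "(a + t) mod m < m" using m0 by simp
    have yn: "y < n" using t pos bd m_def f_def by auto
    have "(y + n - S!a) mod n \<le> (S!b + n - S!a) mod n"
      using dcase
    proof
      assume h: "a \<le> b \<and> d = b - a"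
      then have e: "(a + t) mod m = a + t" using t b m_def by auto
      have "S!a \<le> y" "y \<le> S!b"
        using sorted_le[OF srt] e t h b m_def f_def by auto
      then show ?thesis using un yn mod_shift by simp
    next
      assume h: "b < a \<and> d = b + m - a"
      have wu: "S!b < S!a" using sorted_wrt_nth_less[OF srt] h a by auto
      have r: "(S!b + n - S!a) mod n = S!b + n - S!a" using wu un by simp
      show ?thesis
      proof (cases "a + t < m")
        case True
        then have "S!a \<le> y" using sorted_le[OF srt] t f_def m_def by auto
        then have "(y + n - S!a) mod n = y - S!a" using mod_shift yn by blast
        then show ?thesis using r yn un wu by linarith
      next
        case False
        have lt: "a + t - m < m" using t h a b m_def by arith
        have "(a + t) mod m = (a + t - m) mod m" using False by (simp add: le_mod_geq)
        then have e: "(a + t) mod m = a + t - m" using lt by simp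
        have "a + t - m \<le> b" using t h a m_def by arith
        then have "y \<le> S!b" using sorted_le[OF srt] e t f_def b by auto
        then show ?thesis using r yn un wu by auto
      qed
    qed
    then show "y \<in> arc n (S!a) (S!b)" using arc_mem un yn by blast
  qed
  have dist: "distinct S" using srt strict_sorted_iff by blast
  have inj: "inj_on f {..d}"
  proof
    fix t1 t2 assume t: "t1 \<in> {..d}" "t2 \<in> {..d}" and "f t1 = f t2"
    have b1: "(a + t1) mod m < length S" "(a + t2) mod m < length S" using m0 m_def by auto
    have "S ! ((a + t1) mod m) = S ! ((a + t2) mod m)" using \<open>f t1 = f t2\<close> f_def by simp
    then have "(a + t1) mod m = (a + t2) mod m"
      using nth_eq_iff_index_eq[OF dist b1] by blast
    then have eqm: "(a + t1) mod m = (a + t2) mod m" .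
    show "t1 = t2"
    proof (rule ccontr)
      assume ne: "t1 \<noteq> t2"
      show False
      proof (cases "t1 < t2")
        case True
        have "m dvd (a + t2) - (a + t1)" using eqm True
          by (metis less_imp_le_nat add_le_mono1 add.commute mod_eq_dvd_iff_nat)
        then have "m dvd t2 - t1" by simp
        moreover have "0 < t2 - t1" "t2 - t1 < m" using True t dm by auto
        ultimately show False using nat_dvd_not_less by blast
      next
        case False
        then have lt: "t2 < t1" using ne by simp
        have "m dvd (a + t1) - (a + t2)" using eqm lt
          by (metis less_imp_le_nat add_le_mono1 add.commute mod_eq_dvd_iff_nat)
        then have "m dvd t1 - t2" by simp
        moreover have "0 < t1 - t2" "t1 - t2 < m" using lt t dm by auto
        ultimately show False using nat_dvd_not_less by blast
      qed
    qed
  qed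
  have "card (f ` {..d}) = d + 1" using card_image[OF inj] by simp
  then show ?thesis using card_mono[OF arc_finite sub] d_def m_def by simp
qed

theorem lemma3p11:
  fixes n r l :: nat and ws :: "nat list"
  assumes "r \<ge> 2" and "l \<ge> r - 1" and "semi_valid n l ws"
  shows "r_valid n r l ws"
proof -
  define m where "m = 2 * l + 1"
  define L where "L = map (\<lambda>j. ws ! (2 * j)) [0..<l + 1] @ map (\<lambda>j. ws ! (2 * j + 1)) [0..<l]"
  have len: "length ws = m" and dws: "distinct ws" and vert: "\<forall>v\<in>set ws. v < n"
    and cyc: "cyc_ordered L"
    using assms(3) unfolding semi_valid_def m_def L_def vertex_def by auto
  obtain k where srt: "sorted_wrt (<) (rotate k L)" using cyc cyc_ordered_def by auto
  define S where "S = rotate k L"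
  define k' where "k' = k mod m"
  have lenL: "length L = m" unfolding L_def m_def by simp
  have lenS: "length S = m" using lenL S_def by simp
  define pos where "pos i = (if even i then i div 2 else l + 1 + i div 2)" for i
  have Lpos: "L ! pos i = ws ! i" if "i < m" for i
  proof (cases "even i")
    case True
    then obtain j where j: "i = 2 * j" by auto
    then have jl: "j < l + 1" using that m_def by simp
    have pj: "pos i = j" using j unfolding pos_def by simp
    show ?thesis unfolding pj L_def using jl j by (cases "j < l") (auto simp: nth_append less_Suc_eq)
  next
    case False
    then obtain j where j: "i = 2 * j + 1" by (auto elim: oddE)
    then have jl: "j < l" using that m_def by simp
    have pj: "pos i = l + 1 + j" using j unfolding pos_def by simp
    show ?thesis unfolding pj L_def using jl j by (simp add: nth_append)
  qed
  have posm: "pos i < m" if "i < m" for i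
  proof (cases "even i")
    case False
    then obtain j where j: "i = 2 * j + 1" by (auto elim: oddE)
    then show ?thesis using that unfolding pos_def m_def by simp
  qed (use that in \<open>auto simp: pos_def m_def\<close>)
  define sp where "sp p = nat ((int p - int k') mod int m)" for p
  have m0: "m > 0" using m_def by simp
  have spm: "sp p < m" for p unfolding sp_def using m0
    by (simp add: nat_less_iff)
  have Ssp: "S ! sp p = L ! p" if "p < m" for p
  proof -
    have "S ! sp p = L ! ((k + sp p) mod m)"
      unfolding S_def using spm lenL by (simp add: nth_rotate)
    also have "(k + sp p) mod m = p"
    proof -
      have "int ((k + sp p) mod m) = (int k + (int p - int k') mod int m) mod int m"
        unfolding sp_def using m0 by (simp add: zmod_int)
      also have "\<dots> = (int k + (int p - int k')) mod int m" by (simp add: mod_add_right_eq)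
      also have "\<dots> = (int k' + (int p - int k')) mod int m"
        unfolding k'_def by (metis mod_add_left_eq zmod_int)
      also have "\<dots> = int p" using that by simp
      finally show ?thesis by simp
    qed
    finally show ?thesis .
  qed
  have vS: "\<forall>x\<in>set S. x < n"
  proof
    fix x assume "x \<in> set S"
    then have "x \<in> set L" unfolding S_def by simp
    then show "x < n" unfolding L_def using vert len m_def by auto
  qed
  have main: "card (arc n (ws ! i) (ws ! ((i + m - 1) mod m))) \<ge> l + 1" if i: "i < m" for i
  proof -
    define i' where "i' = (i + m - 1) mod m"
    have i'm: "i' < m" using m0 i'_def by simp
    have d: "(int (pos i') - int (pos i)) mod int m = int l"
    proof (cases "i = 0")
      case True
      then have "i' = 2 * l" unfolding i'_def m_def by simp
      then show ?thesis using True unfolding pos_def m_def by simp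
    next
      case False
      then have "i + m - 1 = (i - 1) + m" by simp
      moreover have "i - 1 < m" using i by simp
      ultimately have i'e: "i' = i - 1" unfolding i'_def by (simp only: mod_add_self2 mod_less)
      show ?thesis
      proof (cases "even i")
        case True
        then obtain j where "i = 2 * j" by auto
        then show ?thesis using i'e False unfolding pos_def m_def by auto
      next
        case odd: False
        then obtain j where j: "i = 2 * j + 1" by (auto elim: oddE)
        have pi: "pos i = l + 1 + j" "pos i' = j" using j i'e unfolding pos_def by auto
        have "(int (pos i') - int (pos i)) mod int m = (int l - int m) mod int m"
          unfolding pi m_def by (simp add: algebra_simps)
        also have "\<dots> = int l mod int m" by (rule minus_mod_self2)
        also have "\<dots> = int l" using m_def by simp
        finally show ?thesis .
      qed
    qed
    have eq: "(int (sp (pos i')) - int (sp (pos i))) mod int m = int l"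
    proof -
      have "(int (sp (pos i')) - int (sp (pos i))) mod int m
          = ((int (pos i') - int k') mod int m - (int (pos i) - int k') mod int m) mod int m"
        unfolding sp_def using m0 by simp
      also have "\<dots> = ((int (pos i') - int k') - (int (pos i) - int k')) mod int m"
        by (simp add: mod_diff_eq)
      also have "\<dots> = int l" using d by simp
      finally show ?thesis .
    qed
    have "card (arc n (S ! sp (pos i)) (S ! sp (pos i'))) \<ge> l + 1"
      using sorted_arc[OF srt[folded S_def] vS, of "sp (pos i)" "sp (pos i')"] spm lenS eq
      by simp
    moreover have "S ! sp (pos i) = ws ! i" using Ssp posm Lpos i by simp
    moreover have "S ! sp (pos i') = ws ! i'" using Ssp posm Lpos i'm by simp
    ultimately show ?thesis unfolding i'_def by simp
  qed
  have rl: "r \<le> l + 1" using assms(1,2) by arith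
  show ?thesis unfolding r_valid_def
  proof (intro conjI allI impI)
    fix i assume "i < length ws"
    then show "r \<le> card (arc n (ws ! i) (ws ! ((i + length ws - 1) mod length ws)))"
      using main[of i] len rl by simp
  qed (rule assms(3))
qed

end
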